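(* Let $A=\mathbb Q[x_1,x_2,\dots]$ with $\deg x_n=n$, let $d$ be the derivation of $A$ with $d x_n=x_{n-1}$ for $n\ge2$ and $d x_1=0$, and let $J=\ker d=\bigoplus_n J_n$ with the induced grading. Then the Poincaré series $J(t)=\sum_{n\ge0}(\dim J_n)t^n$ is $$J(t)=\frac{1}{(1-t^2)(1-t^3)(1-t^4)\cdots}+t .$$ *)

theory Defs
  imports "HOL-Library.Multiset" "HOL-Library.Function_Algebras" "HOL-Computational_Algebra.Formal_Power_Series"
begin

text \<open>A monomial x_{a_1}...x_{a_k} is encoded by the
multiset {a_1,...,a_k} of positive integers; its degree is the sum of the multiset.
A polynomial is its coefficient function on monomials.\<close>

definition Mon :: "nat \<Rightarrow> nat multiset set" where
  "Mon n = {m. 0 \<notin># m \<and> sum_mset m = n}"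

definition A_hom :: "nat \<Rightarrow> (nat multiset \<Rightarrow> rat) set" where
  "A_hom n = {f. \<forall>m. f m \<noteq> 0 \<longrightarrow> m \<in> Mon n}"

text \<open>Coefficient of the monomial m' in d(monomial m), where d is the derivation with
d x_i = x_{i-1} (i >= 2), d x_1 = 0 (Leibniz rule on the monomial).\<close>
definition dcoef :: "nat multiset \<Rightarrow> nat multiset \<Rightarrow> rat" where
  "dcoef m m' = (\<Sum>i\<in>{i \<in> set_mset m. 2 \<le> i \<and> m' = add_mset (i - 1) (m - {#i#})}.
                   of_nat (count m i))"

definition der :: "nat \<Rightarrow> (nat multiset \<Rightarrow> rat) \<Rightarrow> (nat multiset \<Rightarrow> rat)" where
  "der n f = (\<lambda>m'. \<Sum>m\<in>Mon n. f m * dcoef m m')"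

definition J_hom :: "nat \<Rightarrow> (nat multiset \<Rightarrow> rat) set" where
  "J_hom n = {f \<in> A_hom n. der n f = (\<lambda>_. 0)}"

definition qdim :: "(nat multiset \<Rightarrow> rat) set \<Rightarrow> nat" where
  "qdim S = vector_space.dim (\<lambda>(a::rat) f x. a * f x) S"

definition J_series :: "rat fps" where
  "J_series = Abs_fps (\<lambda>n. of_nat (qdim (J_hom n)))"

end

theory Submission
  imports Defs
begin

lemma sum_fun_apply: "(sum f A) x = sum (\<lambda>a. f a x) A"
  by (induct A rule: infinite_finite_induct) auto

interpretation V: vector_space "\<lambda>(a::rat) (f::nat multiset \<Rightarrow> rat) x. a * f x"
  by unfold_locales (auto simp: fun_eq_iff algebra_simps)


interpretation VP: vector_space_pair "\<lambda>(a::rat) (f::nat multiset \<Rightarrow> rat) x. a * f x"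
   "\<lambda>(a::rat) (f::nat multiset \<Rightarrow> rat) x. a * f x"
  by unfold_locales

lemma rank_nullity:
  fixes T :: "(nat multiset \<Rightarrow> rat) \<Rightarrow> (nat multiset \<Rightarrow> rat)"
  assumes lin: "Vector_Spaces.linear (\<lambda>(a::rat) (f::nat multiset \<Rightarrow> rat) x. a * f x) (\<lambda>(a::rat) (f::nat multiset \<Rightarrow> rat) x. a * f x) T"
    and D: "V.subspace D" and F: "finite F" "D \<subseteq> V.span F"
  shows "V.dim {x\<in>D. T x = 0} + V.dim (T ` D) = V.dim D"
proof -
  let ?K = "{x\<in>D. T x = 0}"
  obtain B where B: "B \<subseteq> ?K" "V.independent B" "?K \<subseteq> V.span B" "card B = V.dim ?K"
    using V.basis_exists by blast
  obtain C where C: "B \<subseteq> C" "C \<subseteq> D" "V.independent C" "D \<subseteq> V.span C"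
    using V.maximal_independent_subset_extend[of B D] B by auto
  have finC: "finite C" using V.independent_span_bound[OF F(1) C(3)] C F by blast
  have cardC: "card C = V.dim D" using V.basis_card_eq_dim C by blast
  have finB: "finite B" using finC C(1) finite_subset by blast
  have TC: "T ` D \<subseteq> V.span (T ` C)"
    using C(4) VP.linear_span_image[OF lin, of C] by auto
  have "T ` C \<subseteq> insert 0 (T ` (C - B))" using B(1) by auto
  then have "V.span (T ` C) \<subseteq> V.span (T ` (C - B))"
    by (metis V.span_insert_0 V.span_mono)
  then have TD: "T ` D \<subseteq> V.span (T ` (C - B))" using TC by blast
  have "V.dim (T ` D) \<le> card (T ` (C - B))"
    by (rule V.dim_le_card[OF TD]) (use finC in simp)
  also have "\<dots> \<le> card (C - B)" using finC card_image_le by blast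
  also have "\<dots> = card C - card B" using finB C(1) card_Diff_subset by blast
  finally have le1: "V.dim (T ` D) + V.dim ?K \<le> V.dim D" using B(4) cardC
    using card_mono[OF finC C(1)] by linarith
  obtain E where E: "E \<subseteq> T ` D" "V.independent E" "T ` D \<subseteq> V.span E" "card E = V.dim (T ` D)"
    using V.basis_exists by blast
  have finE: "finite E"
    using V.independent_span_bound[OF _ E(2), of "T ` C"] E(1) TC finC by blast
  have "\<forall>e\<in>E. \<exists>p\<in>D. T p = e" using E(1) by blast
  then obtain p where p: "\<And>e. e \<in> E \<Longrightarrow> p e \<in> D \<and> T (p e) = e" by metis
  let ?P = "p ` E"
  have TP: "T ` ?P = E" unfolding image_image using p by (simp cong: image_cong)
  have PD: "V.span ?P \<subseteq> D" using V.span_minimal[OF _ D] p by blast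
  have "D \<subseteq> V.span (B \<union> ?P)"
  proof
    fix x assume x: "x \<in> D"
    then have "T x \<in> V.span (T ` ?P)" using E(3) TP by auto
    then obtain y where y: "y \<in> V.span ?P" "T y = T x"
      using VP.linear_span_image[OF lin, of ?P] by auto
    have "x - y \<in> D" using V.subspace_diff[OF D x] y PD by blast
    moreover have "T (x - y) = 0" using VP.linear_diff[OF lin] y by simp
    ultimately have "x - y \<in> V.span B" using B(3) by blast
    then have "x - y \<in> V.span (B \<union> ?P)" using V.span_mono[of B "B \<union> ?P"] by blast
    moreover have "y \<in> V.span (B \<union> ?P)" using y V.span_mono[of ?P "B \<union> ?P"] by blast
    ultimately have "(x - y) + y \<in> V.span (B \<union> ?P)" by (rule V.span_add)
    then show "x \<in> V.span (B \<union> ?P)" by simp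
  qed
  then have "V.dim D \<le> card (B \<union> ?P)" using V.dim_le_card finB finE by blast
  also have "\<dots> \<le> card B + card ?P" by (rule card_Un_le)
  also have "\<dots> \<le> card B + card E" using finE card_image_le by auto
  finally show ?thesis using le1 B(4) E(4) by linarith
qed

lemma size_le_sum: "0 \<notin># m \<Longrightarrow> size m \<le> sum_mset (m::nat multiset)"
proof (induct m)
  case (add x m)
  then have "x \<ge> 1" "size m \<le> sum_mset m" by (auto simp: Suc_le_eq)
  then show ?case by simp
qed simp

lemma finite_Mon: "finite (Mon n)"
proof -
  have "Mon n \<subseteq> (\<Union>k\<le>n. multisets_of_size {1..n} k)"
  proof
    fix m assume "m \<in> Mon n"
    then have h: "0 \<notin># m" "sum_mset m = n" by (auto simp: Mon_def)
    have a1: "\<forall>i\<in>#m. i \<le> n" using h(2) by (metis mset_subset_eq_single multi_member_split sum_mset.remove le_add1)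
    have a2: "size m \<le> sum_mset m" using h(1) by (rule size_le_sum)
    show "m \<in> (\<Union>k\<le>n. multisets_of_size {1..n} k)"
    proof -
      have "set_mset m \<subseteq> {1..n}" using h a1 a2
        by (auto simp: Suc_le_eq) (metis gr0I)
      then show ?thesis using a1 a2 h by (auto simp: multisets_of_size_def)
    qed
  qed
  then show ?thesis by (rule finite_subset) auto
qed

definition delta :: "nat multiset \<Rightarrow> nat multiset \<Rightarrow> rat" where
  "delta m = (\<lambda>x. if x = m then 1 else 0)"

lemma A_hom_subspace: "V.subspace (A_hom n)"
  unfolding V.subspace_def A_hom_def by (auto; metis add_0)

lemma delta_A_hom: "m \<in> Mon n \<Longrightarrow> delta m \<in> A_hom n"
  by (auto simp: delta_def A_hom_def)

lemma A_hom_span: "A_hom n = V.span (delta ` Mon n)"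
proof
  show "V.span (delta ` Mon n) \<subseteq> A_hom n"
    by (rule V.span_minimal) (auto simp: delta_A_hom A_hom_subspace)
  show "A_hom n \<subseteq> V.span (delta ` Mon n)"
  proof
    fix f assume f: "f \<in> A_hom n"
    have "f = (\<Sum>m\<in>Mon n. (\<lambda>x. f m * delta m x))"
    proof
      fix x
      have "(\<Sum>m\<in>Mon n. (\<lambda>x. f m * delta m x)) x = (\<Sum>m\<in>Mon n. if x = m then f x else 0)"
        unfolding sum_fun_apply by (rule sum.cong) (auto simp: delta_def)
      also have "\<dots> = f x" using f finite_Mon[of n] by (auto simp: A_hom_def)
      finally show "f x = (\<Sum>m\<in>Mon n. (\<lambda>x. f m * delta m x)) x" by simp
    qed
    also have "\<dots> \<in> V.span (delta ` Mon n)"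
      by (intro V.span_sum V.span_scale V.span_base) auto
    finally show "f \<in> V.span (delta ` Mon n)" .
  qed
qed

lemma delta_indep: "V.independent (delta ` M)"
proof
  assume "V.dependent (delta ` M)"
  then obtain m where m: "m \<in> M" "delta m \<in> V.span (delta ` M - {delta m})"
    unfolding V.dependent_def by auto
  have "V.span (delta ` M - {delta m}) \<subseteq> {f. f m = 0}"
    by (rule V.span_minimal) (auto simp: delta_def V.subspace_def)
  with m show False by (auto simp: delta_def)
qed

lemma inj_delta: "inj delta"
  by (rule injI) (metis delta_def zero_neq_one)

lemma dim_A_hom: "V.dim (A_hom n) = card (Mon n)"
  by (rule V.dim_unique[of "delta ` Mon n"])
     (auto simp: delta_A_hom A_hom_span delta_indep card_image inj_on_subset[OF inj_delta] V.span_superset)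

lemma der_linear: "Vector_Spaces.linear (\<lambda>(a::rat) (f::nat multiset \<Rightarrow> rat) x. a * f x) (\<lambda>(a::rat) (f::nat multiset \<Rightarrow> rat) x. a * f x) (der n)"
  unfolding Vector_Spaces.linear_iff
  by (auto simp: V.vector_space_axioms der_def fun_eq_iff sum.distrib algebra_simps sum_distrib_left)

lemma dcoef_nonzero: "dcoef m m' \<noteq> 0 \<Longrightarrow> \<exists>i. i \<in># m \<and> 2 \<le> i \<and> m' = add_mset (i - 1) (m - {#i#})"
proof (rule ccontr)
  assume a: "dcoef m m' \<noteq> 0" and b: "\<not> ?thesis"
  then have e: "{i \<in> set_mset m. 2 \<le> i \<and> m' = add_mset (i - 1) (m - {#i#})} = {}" by blast
  show False using a unfolding dcoef_def by (simp only: e sum.empty)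
qed

lemma Mon_step: "m \<in> Mon n \<Longrightarrow> i \<in># m \<Longrightarrow> 2 \<le> i \<Longrightarrow> add_mset (i - 1) (m - {#i#}) \<in> Mon (n - 1)"
  unfolding Mon_def using sum_mset.remove[of i m] by (auto dest: in_diffD)

lemma der_support: "der n f m' \<noteq> 0 \<Longrightarrow> m' \<in> Mon (n - 1)"
  unfolding der_def using dcoef_nonzero Mon_step
  by (metis (no_types, lifting) mult_eq_0_iff sum.neutral)

lemma der_delta: "L \<in> Mon n \<Longrightarrow> der n (delta L) = dcoef L"
proof
  fix m' assume L: "L \<in> Mon n"
  have "der n (delta L) m' = (\<Sum>m\<in>Mon n. if L = m then dcoef L m' else 0)"
    unfolding der_def by (rule sum.cong) (auto simp: delta_def)
  also have "\<dots> = dcoef L m'" using L finite_Mon[of n] by simp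
  finally show "der n (delta L) m' = dcoef L m'" .
qed

lemma elem_le_sum: "x \<in># m \<Longrightarrow> x \<le> sum_mset (m::nat multiset)"
  using sum_mset.remove by fastforce

lemma der_surj:
  assumes n: "2 \<le> n"
  shows "der n ` A_hom n = A_hom (n - 1)"
proof
  show "der n ` A_hom n \<subseteq> A_hom (n - 1)" using der_support by (auto simp: A_hom_def)
  let ?I = "der n ` A_hom n"
  have sub: "V.subspace ?I" by (rule VP.linear_subspace_image[OF der_linear A_hom_subspace])
  have key: "\<forall>m\<in>Mon (n - 1). (n - 1) - Max (set_mset m) = k \<longrightarrow> delta m \<in> ?I" for k
  proof (induction k rule: less_induct)
    case (less k)
    show ?case
    proof (intro ballI impI)
      fix m assume m: "m \<in> Mon (n - 1)" and k: "(n - 1) - Max (set_mset m) = k"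
      define a where "a = Max (set_mset m)"
      have m0: "0 \<notin># m" "sum_mset m = n - 1" using m by (auto simp: Mon_def)
      have ne: "m \<noteq> {#}" using m0 n by auto
      have am: "a \<in># m" using ne by (simp add: a_def)
      have amax: "\<And>x. x \<in># m \<Longrightarrow> x \<le> a" by (simp add: a_def)
      have a1: "1 \<le> a" using am m0 by (cases a) auto
      have an: "a \<le> n - 1" using elem_le_sum[OF am] m0 by simp
      have ana: "a + 1 \<notin># m" using amax by fastforce
      define L where "L = add_mset (a+1) (m - {#a#})"
      have sL: "sum_mset m = a + sum_mset (m - {#a#})" using sum_mset.remove[OF am] .
      have L: "L \<in> Mon n"
        using m0 sL an n unfolding L_def Mon_def by (auto dest: in_diffD)
      have dL: "dcoef L \<in> ?I" using der_delta[OF L] delta_A_hom[OF L] by (metis image_eqI)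
      have cL: "count L (a + 1) = 1"
        using ana unfolding L_def by (simp add: not_in_iff)
      have setL: "{i \<in> set_mset L. 2 \<le> i \<and> m = add_mset (i - 1) (L - {#i#})} = {a+1}"
      proof (intro equalityI subsetI)
        fix x assume x: "x \<in> {i \<in> set_mset L. 2 \<le> i \<and> m = add_mset (i - 1) (L - {#i#})}"
        show "x \<in> {a+1}"
        proof (rule ccontr)
          assume "x \<notin> {a+1}"
          then have "a + 1 \<in># L - {#x#}" using cL by (simp add: in_diff_count)
          then have "a + 1 \<in># m" using x by auto
          then show False using ana by simp
        qed
      next
        fix x assume "x \<in> {a+1}"
        then show "x \<in> {i \<in> set_mset L. 2 \<le> i \<and> m = add_mset (i - 1) (L - {#i#})}"
          using a1 am unfolding L_def by auto
      qed
      have dLm: "dcoef L m = 1" unfolding dcoef_def setL using cL by simp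
      have dLo: "a + 1 \<in># m'" if h: "dcoef L m' \<noteq> 0" "m' \<noteq> m" for m'
      proof -
        obtain i where i: "i \<in># L" "2 \<le> i" "m' = add_mset (i - 1) (L - {#i#})"
          using dcoef_nonzero[OF h(1)] by blast
        have "i \<noteq> a + 1"
        proof
          assume "i = a + 1"
          then have "m' = add_mset a (m - {#a#})" using i(3) unfolding L_def by simp
          then show False using h(2) am by simp
        qed
        then have "a + 1 \<in># L - {#i#}" using cL by (simp add: in_diff_count)
        then show ?thesis using i(3) by simp
      qed
      have dLs: "m' \<in> Mon (n - 1)" if h: "dcoef L m' \<noteq> 0" for m'
      proof -
        obtain i where i: "i \<in># L" "2 \<le> i" "m' = add_mset (i - 1) (L - {#i#})"
          using dcoef_nonzero[OF h(1)] by blast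
        then show ?thesis using Mon_step[OF L i(1,2)] by simp
      qed
      let ?S = "(\<Sum>m'\<in>Mon (n - 1) - {m}. (\<lambda>x. dcoef L m' * delta m' x))"
      have eq: "delta m = dcoef L - ?S"
      proof
        fix x
        have "?S x = (\<Sum>m'\<in>Mon (n - 1) - {m}. if m' = x then dcoef L x else 0)"
          unfolding sum_fun_apply by (rule sum.cong) (auto simp: delta_def)
        also have "\<dots> = (if x \<in> Mon (n - 1) - {m} then dcoef L x else 0)"
          using finite_Mon[of "n - 1"] by simp
        finally have Sx: "?S x = (if x \<in> Mon (n - 1) - {m} then dcoef L x else 0)" .
        show "delta m x = (dcoef L - ?S) x"
          using Sx dLm dLs[of x] by (auto simp: delta_def)
      qed
      have "?S \<in> ?I"
      proof (rule V.subspace_sum[OF sub])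
        fix m' assume m': "m' \<in> Mon (n - 1) - {m}"
        show "(\<lambda>x. dcoef L m' * delta m' x) \<in> ?I"
        proof (cases "dcoef L m' = 0")
          case True
          then have "(\<lambda>x. dcoef L m' * delta m' x) = 0" by (simp add: fun_eq_iff)
          then show ?thesis using V.subspace_0[OF sub] by (simp only:)
        next
          case False
          then have "a + 1 \<in># m'" using dLo m' by blast
          then have "a + 1 \<le> Max (set_mset m')" by simp
          moreover have "Max (set_mset m') \<le> n - 1"
          proof -
            have "m' \<noteq> {#}" using \<open>a + 1 \<in># m'\<close> by auto
            then have "Max (set_mset m') \<in># m'" by simp
            then show ?thesis using elem_le_sum m' by (fastforce simp: Mon_def)
          qed
          ultimately have "(n - 1) - Max (set_mset m') < k" using k an unfolding a_def by linarith
          then have "delta m' \<in> ?I" using less.IH m' by blast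
          then show ?thesis using V.subspace_scale[OF sub] by blast
        qed
      qed
      then show "delta m \<in> ?I" using eq V.subspace_diff[OF sub dL] by simp
    qed
  qed
  then have "delta ` Mon (n - 1) \<subseteq> ?I" by blast
  then show "A_hom (n - 1) \<subseteq> ?I" unfolding A_hom_span[of "n - 1"] by (rule V.span_minimal[OF _ sub])
qed

definition Mk :: "nat \<Rightarrow> nat \<Rightarrow> nat multiset set" where
  "Mk k n = {m \<in> Mon n. \<forall>i\<in>#m. i \<le> k}"

lemma finite_Mk: "finite (Mk k n)"
  unfolding Mk_def using finite_Mon by simp

lemma Mk_0: "Mk 0 n = (if n = 0 then {{#}} else {})"
proof -
  have "m = {#}" if "m \<in> Mk 0 n" for m
  proof -
    have "\<forall>x. x \<notin># m" using that unfolding Mk_def Mon_def by fastforce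
    then show ?thesis by (simp add: multiset_eqI count_eq_zero_iff)
  qed
  then have A: "Mk 0 n \<subseteq> {{#}}" by blast
  have B: "({#} \<in> Mk 0 n) = (n = 0)" by (auto simp: Mk_def Mon_def)
  show ?thesis using A B by auto
qed

lemma Mk_big: "n \<le> k \<Longrightarrow> Mk k n = Mon n"
  unfolding Mk_def Mon_def using elem_le_sum by fastforce

lemma Mk_Suc_small: "n < Suc k \<Longrightarrow> Mk (Suc k) n = Mk k n"
  unfolding Mk_def Mon_def using elem_le_sum le_Suc_eq by fastforce

lemma Mk_Suc_big:
  assumes "Suc k \<le> n"
  shows "Mk (Suc k) n = Mk k n \<union> add_mset (Suc k) ` Mk (Suc k) (n - Suc k)"
proof (intro equalityI subsetI)
  fix m assume m: "m \<in> Mk (Suc k) n"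
  show "m \<in> Mk k n \<union> add_mset (Suc k) ` Mk (Suc k) (n - Suc k)"
  proof (cases "Suc k \<in># m")
    case True
    then have "m = add_mset (Suc k) (m - {#Suc k#})" by simp
    moreover have "m - {#Suc k#} \<in> Mk (Suc k) (n - Suc k)"
      using m True sum_mset.remove[OF True] unfolding Mk_def Mon_def by (auto dest: in_diffD)
    ultimately show ?thesis by blast
  next
    case False
    then show ?thesis using m unfolding Mk_def by (auto simp: le_Suc_eq)
  qed
next
  fix m assume "m \<in> Mk k n \<union> add_mset (Suc k) ` Mk (Suc k) (n - Suc k)"
  then show "m \<in> Mk (Suc k) n" using assms unfolding Mk_def Mon_def by auto
qed

lemma card_Mk_Suc:
  "card (Mk (Suc k) n) = card (Mk k n) + (if Suc k \<le> n then card (Mk (Suc k) (n - Suc k)) else 0)"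
proof (cases "Suc k \<le> n")
  case True
  have disj: "Mk k n \<inter> add_mset (Suc k) ` Mk (Suc k) (n - Suc k) = {}"
    unfolding Mk_def by auto
  have "card (Mk (Suc k) n) = card (Mk k n) + card (add_mset (Suc k) ` Mk (Suc k) (n - Suc k))"
    unfolding Mk_Suc_big[OF True] by (rule card_Un_disjoint) (auto simp: finite_Mk disj)
  also have "card (add_mset (Suc k) ` Mk (Suc k) (n - Suc k)) = card (Mk (Suc k) (n - Suc k))"
    by (rule card_image) (auto simp: inj_on_def)
  finally show ?thesis using True by simp
next
  case False
  then show ?thesis using Mk_Suc_small[of n k] by simp
qed

definition Pk :: "nat \<Rightarrow> rat fps" where
  "Pk k = Abs_fps (\<lambda>n. of_nat (card (Mk k n)))"

lemma Pk_0: "Pk 0 = 1"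
  by (rule fps_ext) (simp add: Pk_def Mk_0)

lemma Pk_Suc: "Pk (Suc k) * (1 - fps_X ^ Suc k) = Pk k"
proof (rule fps_ext)
  fix n
  have "fps_nth (Pk (Suc k) * (1 - fps_X ^ Suc k)) n = fps_nth (Pk (Suc k)) n - fps_nth (Pk (Suc k) * fps_X ^ Suc k) n"
    by (simp add: algebra_simps)
  also have "\<dots> = fps_nth (Pk k) n"
    unfolding fps_X_power_mult_right_nth by (simp add: Pk_def card_Mk_Suc[of k n])
  finally show "fps_nth (Pk (Suc k) * (1 - fps_X ^ Suc k)) n = fps_nth (Pk k) n" .
qed

lemma Pk_prod: "Pk N * (\<Prod>k\<in>{1..N}. 1 - fps_X ^ k) = 1"
proof (induction N)
  case 0
  then show ?case by (simp add: Pk_0)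
next
  case (Suc N)
  have "Pk (Suc N) * (\<Prod>k\<in>{1..Suc N}. 1 - fps_X ^ k)
      = (Pk (Suc N) * (1 - fps_X ^ Suc N)) * (\<Prod>k\<in>{1..N}. 1 - fps_X ^ k)"
    by (simp add: prod.cl_ivl_Suc algebra_simps) 
  also have "\<dots> = Pk N * (\<Prod>k\<in>{1..N}. 1 - fps_X ^ k)" by (simp only: Pk_Suc)
  also have "\<dots> = 1" by (rule Suc.IH)
  finally show ?case .
qed

definition P :: "rat fps" where
  "P = Abs_fps (\<lambda>n. of_nat (card (Mon n)))"

lemma fps_mult_nth_agree:
  assumes "\<And>i. i \<le> N \<Longrightarrow> fps_nth f i = fps_nth g i" "n \<le> N"
  shows "fps_nth (f * h) n = fps_nth (g * h) n"
  unfolding fps_mult_nth using assms by (intro sum.cong) auto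

lemma P_prod: "n \<le> N \<Longrightarrow> fps_nth (P * (\<Prod>k\<in>{1..N}. 1 - fps_X ^ k)) n = (if n = 0 then 1 else 0)"
proof -
  assume n: "n \<le> N"
  have "fps_nth (P * (\<Prod>k\<in>{1..N}. 1 - fps_X ^ k)) n = fps_nth (Pk N * (\<Prod>k\<in>{1..N}. 1 - fps_X ^ k)) n"
    by (rule fps_mult_nth_agree[OF _ n]) (simp add: P_def Pk_def Mk_big)
  also have "\<dots> = fps_nth 1 n" by (simp only: Pk_prod)
  finally show ?thesis by simp
qed

lemma J_eq: "J_hom n = {x \<in> A_hom n. der n x = 0}"
  by (simp add: J_hom_def zero_fun_def)

lemma qdim_J_big: "2 \<le> n \<Longrightarrow> qdim (J_hom n) + card (Mon (n - 1)) = card (Mon n)"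
proof -
  assume n: "2 \<le> n"
  have "A_hom n \<subseteq> V.span (delta ` Mon n)" using A_hom_span[of n] by simp
  then have "V.dim {x \<in> A_hom n. der n x = 0} + V.dim (der n ` A_hom n) = V.dim (A_hom n)"
    by (intro rank_nullity[OF der_linear A_hom_subspace, of "delta ` Mon n"]) (auto simp: finite_Mon)
  then show ?thesis unfolding qdim_def J_eq der_surj[OF n] dim_A_hom .
qed

lemma der_small: "n \<le> 1 \<Longrightarrow> der n f = 0"
proof
  fix m' assume n: "n \<le> 1"
  have "dcoef m m' = 0" if m: "m \<in> Mon n" for m
  proof (rule ccontr)
    assume "dcoef m m' \<noteq> 0"
    then obtain i where "i \<in># m" "2 \<le> i" using dcoef_nonzero by blast
    then show False using elem_le_sum[of i m] m n by (auto simp: Mon_def)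
  qed
  then show "der n f m' = 0 m'" unfolding der_def by simp
qed

lemma qdim_J_small: "n \<le> 1 \<Longrightarrow> qdim (J_hom n) = card (Mon n)"
proof -
  assume "n \<le> 1"
  then have "J_hom n = A_hom n" unfolding J_eq using der_small by auto
  then show ?thesis using dim_A_hom[of n] by (simp add: qdim_def)
qed

lemma Mon_0: "Mon 0 = {{#}}"
proof -
  have "m = {#}" if "m \<in> Mon 0" for m
  proof -
    have "0 \<notin># m" "sum_mset m = 0" using that unfolding Mon_def by auto
    moreover have "size m \<le> sum_mset m" using size_le_sum[of m] \<open>0 \<notin># m\<close> by blast
    ultimately have "size m = 0" by linarith
    then show ?thesis by simp
  qed
  then show ?thesis by (auto simp: Mon_def)
qed

lemma J_P: "J_series - fps_X = (1 - fps_X) * P"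
proof (rule fps_ext)
  fix n
  have r: "fps_nth ((1 - fps_X) * P) n = fps_nth P n - (if n = 0 then 0 else fps_nth P (n - 1))"
    by (simp add: algebra_simps)
  show "fps_nth (J_series - fps_X) n = fps_nth ((1 - fps_X) * P) n"
  proof (cases "n \<le> 1")
    case True
    then show ?thesis unfolding r using qdim_J_small[OF True]
      by (cases n) (auto simp: J_series_def P_def Mon_0 fps_X_nth)
  next
    case False
    then have "2 \<le> n" by simp
    from qdim_J_big[OF this] have "of_nat (qdim (J_hom n)) = (of_nat (card (Mon n)) - of_nat (card (Mon (n - 1))) :: rat)"
      by (metis add_diff_cancel_right' of_nat_add)
    then show ?thesis unfolding r using False by (simp add: J_series_def P_def fps_X_nth)
  qed
qed

theorem mainTheorem10:
  shows "\<forall>N. \<forall>n\<le>N.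
    fps_nth ((J_series - fps_X) * (\<Prod>k\<in>{2..N}. 1 - fps_X ^ k)) n = (if n = 0 then 1 else 0)"
proof (intro allI impI)
  fix N n :: nat assume n: "n \<le> N"
  show "fps_nth ((J_series - fps_X) * (\<Prod>k\<in>{2..N}. 1 - fps_X ^ k)) n = (if n = 0 then 1 else 0)"
  proof (cases "N = 0")
    case True
    then have "n = 0" using n by simp
    then show ?thesis using True unfolding J_P by (simp add: P_def Mon_0)
  next
    case False
    have pe: "(\<Prod>k\<in>{1..N}. 1 - fps_X ^ k) = (1 - fps_X ^ 1) * (\<Prod>k\<in>{2..N}. 1 - (fps_X :: rat fps) ^ k)"
      using False by (subst prod.atLeast_Suc_atMost) (auto simp: numeral_2_eq_2)
    have "(J_series - fps_X) * (\<Prod>k\<in>{2..N}. 1 - fps_X ^ k) = P * (\<Prod>k\<in>{1..N}. 1 - fps_X ^ k)"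
      by (simp only: J_P pe power_one_right ac_simps)
    then show ?thesis using P_prod[OF n] by simp
  qed
qed

end
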